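(* Let $M$ be a complex manifold of complex dimension $2k+1$ ($k\ge 1$) and let $\omega=\{(U_i,\omega_i)\}$ be a singular contact structure on $M$ of the first type with structurally smooth Martinet hypersurface. Let $L=T^{1,0}M/\mathrm{Ker}(\omega)$, let $\mathfrak{a}(M,\widetilde\omega)$ denote the sheaf of (germs of) infinitesimal contact transformations of $\omega$, and let $\theta:\mathfrak{a}(M,\widetilde\omega)\to\mathcal{O}(L)$ be the map $\theta(X)=\widetilde\omega(X)$. Then the sequence of sheaves $$0\longrightarrow \mathfrak{a}(M,\widetilde\omega)\stackrel{\theta}{\longrightarrow}\mathcal{O}(L)$$ is exact, i.e. $\theta$ is injective.
   Context: A singular contact form on $M$ is a collection $\{(U_i,\omega_i)\}_{i\in I}$ where $\{U_i\}$ is an open cover of $M$ and each $\omega_i$ is a holomorphic $1$-form on $U_i$ such that (1) $\omega_i\wedge(d\omega_i)^k$ vanishes only on a nowhere dense subset of $U_i$, and (2) for all $i,j$ there is a nowhere vanishing holomorphic $f_{ij}$ on $U_i\cap U_j$ with $\omega_i=f_{ij}\omega_j$. Two such forms $\{(U_i,\omega_i)\},\{(V_j,\mu_j)\}$ are equivalent if $\omega_i=h_{ij}\mu_j$ on $U_i\cap V_j$ for nowhere vanishing holomorphic $h_{ij}$; a singular contact structure is an equivalence class. Its kernel $\mathrm{Ker}(\omega)$ is the corank-one subbundle of $T^{1,0}M$ given locally by $\ker\omega_i$. The Martinet hypersurface is $S=\{x:\ (\omega_i\wedge(d\omega_i)^k)(x)=0\}$. Writing $\omega_i\wedge(d\omega_i)^k=H_i\Omega_i$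 with $\Omega_i$ a nowhere vanishing holomorphic $(2k+1)$-form on $U_i$, $S$ is structurally smooth if $dH_i(x)\neq 0$ for all $x\in S\cap U_i$. The structure has singularities of the first type if $\omega_i$ never vanishes (in particular on $S$). Choosing local sections $s_i$ of $L$ with $\omega_i(s_i)\equiv1$, $\widetilde\omega=s_i\otimes\omega_i$ is a globally defined $L$-valued $1$-form. A holomorphic vector field $X$ (on an open set) is an infinitesimal contact transformation if $\mathcal{L}_X\omega_i=h_i\omega_i$ for some holomorphic functions $h_i$. *)

theory Defs
  imports "HOL-Analysis.Analysis"
begin

text \<open>A chart of the complex manifold M of dimension 2k+1 is an
open subset of C^n, n = CARD('n), represented as complex^'n.  The index type 'n
carries a linear order used to order the coordinates dz_j.\<close>

definition coord_line :: "complex^'n \<Rightarrow> 'n \<Rightarrow> complex \<Rightarrow> complex^'n" where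
  "coord_line z j t = z + (\<chi> i. if i = j then t else 0)"

definition holo_on :: "(complex^('n::finite)) set \<Rightarrow> (complex^'n \<Rightarrow> complex) \<Rightarrow> bool" where
  "holo_on U f \<longleftrightarrow> (\<forall>z\<in>U. \<exists>D. (f has_derivative D) (at z) \<and>
      (\<forall>v. D (\<chi> i. \<i> * v$i) = \<i> * D v))"

definition pdz :: "(complex^'n \<Rightarrow> complex) \<Rightarrow> 'n \<Rightarrow> complex^'n \<Rightarrow> complex" where
  "pdz f j z = deriv (\<lambda>t. f (coord_line z j t)) 0"

text \<open>Exterior algebra at a point: a p-form is given by its coefficients
 c(S) on dz_{s1} \<and> ... \<and> dz_{sp}, S = {s1 < ... < sp}.\<close>
definition wsign :: "'n::linorder set \<Rightarrow> 'n set \<Rightarrow> complex" where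
  "wsign A B = (-1) ^ card {(a,b). a \<in> A \<and> b \<in> B \<and> b < a}"

definition wedge :: "(('n::{finite,linorder}) set \<Rightarrow> complex) \<Rightarrow> nat \<Rightarrow> (('n::{finite,linorder}) set \<Rightarrow> complex)
     \<Rightarrow> 'n set \<Rightarrow> complex" where
  "wedge \<alpha> p \<beta> S = (\<Sum>A\<in>{A. A \<subseteq> S \<and> card A = p}. wsign A (S - A) * \<alpha> A * \<beta> (S - A))"

definition form1 :: "('n::finite \<Rightarrow> complex^'n \<Rightarrow> complex) \<Rightarrow> complex^'n \<Rightarrow> 'n set \<Rightarrow> complex" where
  "form1 a z S = (if card S = 1 then a (the_elem S) z else 0)"

definition dform1 :: "(('n::{finite,linorder}) \<Rightarrow> complex^('n::{finite,linorder}) \<Rightarrow> complex) \<Rightarrow> complex^('n::{finite,linorder}) \<Rightarrow> ('n::{finite,linorder}) set \<Rightarrow> complex" where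
  "dform1 a z S = (if card S = 2 then pdz (a (Max S)) (Min S) z - pdz (a (Min S)) (Max S) z else 0)"

fun dpow :: "(('n::{finite,linorder}) \<Rightarrow> complex^('n::{finite,linorder}) \<Rightarrow> complex) \<Rightarrow> nat \<Rightarrow> complex^('n::{finite,linorder}) \<Rightarrow> ('n::{finite,linorder}) set \<Rightarrow> complex" where
  "dpow a 0 z S = (if S = {} then 1 else 0)"
| "dpow a (Suc m) z S = wedge (dform1 a z) 2 (dpow a m z) S"

text \<open>coefficient H of  omega \<and> (d omega)^k = H dz_1 \<and> ... \<and> dz_n\<close>
definition martinet_coeff :: "(('n::{finite,linorder}) \<Rightarrow> complex^('n::{finite,linorder}) \<Rightarrow> complex) \<Rightarrow> nat \<Rightarrow> complex^('n::{finite,linorder}) \<Rightarrow> complex" where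
  "martinet_coeff a k z = wedge (form1 a z) 1 (dpow a k z) UNIV"

text \<open>Lie derivative of omega = sum a_j dz_j along X = sum X_j d/dz_j, j-th coefficient\<close>
definition lie_coeff :: "('n::finite \<Rightarrow> complex^'n \<Rightarrow> complex) \<Rightarrow> ('n \<Rightarrow> complex^'n \<Rightarrow> complex)
     \<Rightarrow> 'n \<Rightarrow> complex^'n \<Rightarrow> complex" where
  "lie_coeff X a j z = (\<Sum>l\<in>UNIV. X l z * pdz (a j) l z + a l z * pdz (X l) j z)"

definition sing_contact_first_smooth :: "nat \<Rightarrow> (complex^(('n::{finite,linorder}))) set
      \<Rightarrow> (('n::{finite,linorder}) \<Rightarrow> complex^('n::{finite,linorder}) \<Rightarrow> complex) \<Rightarrow> bool" where
  "sing_contact_first_smooth k U a \<longleftrightarrow>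
     open U \<and> (\<forall>j. holo_on U (a j)) \<and>
     interior {z\<in>U. martinet_coeff a k z = 0} = {} \<and>
     (\<forall>z\<in>U. \<exists>j. a j z \<noteq> 0) \<and>
     (\<forall>z\<in>U. martinet_coeff a k z = 0 \<longrightarrow> (\<exists>j. pdz (martinet_coeff a k) j z \<noteq> 0))"

definition inf_contact_transf :: "(complex^('n::finite)) set \<Rightarrow> ('n \<Rightarrow> complex^'n \<Rightarrow> complex)
      \<Rightarrow> ('n \<Rightarrow> complex^'n \<Rightarrow> complex) \<Rightarrow> bool" where
  "inf_contact_transf V a X \<longleftrightarrow> (\<forall>j. holo_on V (X j)) \<and>
     (\<exists>h. holo_on V h \<and> (\<forall>z\<in>V. \<forall>j. lie_coeff X a j z = h z * a j z))"

end

theory Submission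
  imports Defs
begin

definition sg :: "'n::linorder \<Rightarrow> 'n set \<Rightarrow> complex" where
  "sg i T = (-1) ^ card {b\<in>T. b < i}"

definition eop :: "'n::linorder \<Rightarrow> ('n set \<Rightarrow> complex) \<Rightarrow> 'n set \<Rightarrow> complex" where
  "eop i f S = (if i \<in> S then sg i (S - {i}) * f (S - {i}) else 0)"

definition iop :: "'n::linorder \<Rightarrow> ('n set \<Rightarrow> complex) \<Rightarrow> 'n set \<Rightarrow> complex" where
  "iop i f S = (if i \<notin> S then sg i S * f (insert i S) else 0)"

lemma sg_sq: "sg i T * sg i T = 1"
  by (simp add: sg_def power_mult_distrib[symmetric])

lemma sg_insert:
  fixes T :: "'n::{finite,linorder} set"
  assumes "j \<notin> T" "j \<noteq> i"
  shows "sg i (insert j T) = (if j < i then - sg i T else sg i T)"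
proof -
  have "{b \<in> insert j T. b < i} = (if j < i then insert j {b\<in>T. b < i} else {b\<in>T. b < i})"
    by auto
  then show ?thesis using assms by (simp add: sg_def)
qed

lemma eop_eop: 
  fixes f :: "'n::{finite,linorder} set \<Rightarrow> complex"
  shows "eop i (eop j f) S = - eop j (eop i f) S"
proof (cases "i = j")
  case True then show ?thesis by (simp add: eop_def)
next
  case False
  show ?thesis
  proof (cases "i \<in> S \<and> j \<in> S")
    case False then show ?thesis by (auto simp: eop_def)
  next
    case True
    have e: "S - {i} - {j} = S - {j} - {i}" by auto
    have a: "S - {i} = insert j (S - {i} - {j})" using True \<open>i\<noteq>j\<close> by auto
    have b: "S - {j} = insert i (S - {j} - {i})" using True \<open>i\<noteq>j\<close> by auto
    have "sg i (S - {i}) = (if j < i then - sg i (S - {j} - {i}) else sg i (S - {j} - {i}))"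
      by (subst a, subst sg_insert) (use \<open>i\<noteq>j\<close> e in auto)
    moreover have "sg j (S - {j}) = (if i < j then - sg j (S - {i} - {j}) else sg j (S - {i} - {j}))"
      by (subst b, subst sg_insert) (use \<open>i\<noteq>j\<close> e in auto)
    moreover have "eop i (eop j f) S = sg i (S - {i}) * (sg j (S - {i} - {j}) * f (S - {i} - {j}))"
      using True \<open>i\<noteq>j\<close> by (simp add: eop_def)
    moreover have "eop j (eop i f) S = sg j (S - {j}) * (sg i (S - {j} - {i}) * f (S - {j} - {i}))"
      using True \<open>i\<noteq>j\<close> by (simp add: eop_def)
    ultimately show ?thesis using \<open>i\<noteq>j\<close> unfolding e
      by (cases "i < j") auto
  qed
qed

lemma iop_eop:
  fixes f :: "'n::{finite,linorder} set \<Rightarrow> complex"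
  shows "iop l (eop i f) S + eop i (iop l f) S = (if l = i then f S else 0)"
proof (cases "l \<in> S")
  case True
  show ?thesis
  proof (cases "l = i")
    case li: True
    have "insert i (S - {i}) = S" using True li by blast
    then have "eop i (iop l f) S = sg i (S - {i}) * sg i (S - {i}) * f S"
      using True li by (simp add: iop_def eop_def)
    then show ?thesis using True li by (simp add: sg_sq iop_def)
  next
    case False
    then show ?thesis using True by (simp add: iop_def eop_def)
  qed
next
  case lS: False
  show ?thesis
  proof (cases "l = i")
    case True
    have "insert i S - {i} = S" using lS True by blast
    then have "iop l (eop i f) S = sg i S * sg i S * f S"
      using lS True by (simp add: iop_def eop_def)
    then show ?thesis using lS True by (simp add: sg_sq eop_def)
  next
    case False
    show ?thesis
    proof (cases "i \<in> S")
      case iS: True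
      have c: "insert l S - {i} = insert l (S - {i})" using False by auto
      have "sg l (insert i (S - {i})) = (if i < l then - sg l (S - {i}) else sg l (S - {i}))"
        by (rule sg_insert) (use False in auto)
      then have s1: "sg l S = (if i < l then - sg l (S - {i}) else sg l (S - {i}))"
        using iS by (simp add: insert_absorb)
      have s2: "sg i (insert l (S - {i})) = (if l < i then - sg i (S - {i}) else sg i (S - {i}))"
        by (rule sg_insert) (use False lS in auto)
      have i1: "iop l (eop i f) S = sg l S * (sg i (insert l (S - {i})) * f (insert l (S - {i})))"
        using lS iS False c by (simp add: iop_def eop_def)
      have e1: "eop i (iop l f) S = sg i (S - {i}) * (sg l (S - {i}) * f (insert l (S - {i})))"
        using lS iS False by (simp add: iop_def eop_def)
      show ?thesis
      proof (cases "i < l")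
        case True
        then have "\<not> l < i" by simp
        then show ?thesis using True s1 s2 \<open>l \<noteq> i\<close> i1 e1 by simp
      next
        case False
        then have "l < i" using \<open>l \<noteq> i\<close> by simp
        then show ?thesis using False s1 s2 \<open>l \<noteq> i\<close> i1 e1 by simp
      qed
    next
      case False
      then show ?thesis using lS \<open>l\<noteq>i\<close> by (auto simp: iop_def eop_def)
    qed
  qed
qed


definition Wop :: "('n::linorder \<Rightarrow> complex) \<Rightarrow> ('n set \<Rightarrow> complex) \<Rightarrow> 'n set \<Rightarrow> complex" where
  "Wop c f S = (\<Sum>j\<in>UNIV. c j * eop j f S)"
definition Pop :: "('n::linorder \<Rightarrow> 'n \<Rightarrow> complex) \<Rightarrow> ('n set \<Rightarrow> complex) \<Rightarrow> 'n set \<Rightarrow> complex" where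
  "Pop D f S = (\<Sum>i\<in>UNIV. \<Sum>j\<in>UNIV. D i j * eop i (eop j f) S)"
definition Iop :: "('n::linorder \<Rightarrow> complex) \<Rightarrow> ('n set \<Rightarrow> complex) \<Rightarrow> 'n set \<Rightarrow> complex" where
  "Iop x f S = (\<Sum>l\<in>UNIV. x l * iop l f S)"

lemma eop_lin: "eop i (\<lambda>S. \<Sum>m\<in>M. c m * g m S) = (\<lambda>S. \<Sum>m\<in>M. c m * eop i (g m) S)"
  by (rule ext) (simp add: eop_def sum_distrib_left mult_ac)
lemma iop_lin: "iop i (\<lambda>S. \<Sum>m\<in>M. c m * g m S) = (\<lambda>S. \<Sum>m\<in>M. c m * iop i (g m) S)"
  by (rule ext) (simp add: iop_def sum_distrib_left mult_ac)
lemma eop_scale: "eop i (\<lambda>S. c * g S) = (\<lambda>S. c * eop i g S)"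
  by (rule ext) (simp add: eop_def mult_ac)
lemma eop_zero: "eop i (\<lambda>S. 0) = (\<lambda>S. 0)"
  by (rule ext) (simp add: eop_def)
lemma iop_zero: "iop i (\<lambda>S. 0) = (\<lambda>S. 0)"
  by (rule ext) (simp add: iop_def)
lemma eop_diff: "eop i (\<lambda>S. f S - g S) = (\<lambda>S. eop i f S - eop i g S)"
  by (rule ext) (simp add: eop_def algebra_simps)
lemma eop_if: "eop i (\<lambda>S. if P then f S else 0) = (\<lambda>S. if P then eop i f S else 0)"
  by (rule ext) (simp add: eop_def)

lemma Wop_fun: "Wop c f = (\<lambda>S. \<Sum>j\<in>UNIV. c j * eop j f S)"
  by (rule ext) (simp add: Wop_def)
lemma Pop_fun: "Pop D f = (\<lambda>S. \<Sum>i\<in>UNIV. \<Sum>j\<in>UNIV. D i j * eop i (eop j f) S)"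
  by (rule ext) (simp add: Pop_def)
lemma Iop_fun: "Iop x f = (\<lambda>S. \<Sum>l\<in>UNIV. x l * iop l f S)"
  by (rule ext) (simp add: Iop_def)

lemma eop_Wop: "eop i (Wop c f) S = (\<Sum>j\<in>UNIV. c j * eop i (eop j f) S)"
  unfolding Wop_fun eop_lin ..
lemma iop_Wop: "iop i (Wop c f) S = (\<Sum>j\<in>UNIV. c j * iop i (eop j f) S)"
  unfolding Wop_fun iop_lin ..
lemma eop_Iop: "eop i (Iop x f) S = (\<Sum>j\<in>UNIV. x j * eop i (iop j f) S)"
  unfolding Iop_fun eop_lin ..
lemma eop_Pop: "eop m (Pop D f) S = (\<Sum>i\<in>UNIV. \<Sum>j\<in>UNIV. D i j * eop m (eop i (eop j f)) S)"
  by (simp add: Pop_def eop_def sum_distrib_left mult_ac)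
lemma iop_Pop: "iop m (Pop D f) S = (\<Sum>i\<in>UNIV. \<Sum>j\<in>UNIV. D i j * iop m (eop i (eop j f)) S)"
  by (simp add: Pop_def iop_def sum_distrib_left mult_ac)

lemma eop_eop_fun:
  fixes f :: "'n::{finite,linorder} set \<Rightarrow> complex"
  shows "eop i (eop j f) = (\<lambda>S. - eop j (eop i f) S)"
  by (rule ext) (rule eop_eop)

lemma eop_neg: "eop i (\<lambda>S. - g S) = (\<lambda>S. - eop i g S)"
  by (rule ext) (simp add: eop_def)

lemma eop3:
  fixes f :: "'n::{finite,linorder} set \<Rightarrow> complex"
  shows "eop m (eop i (eop j f)) S = eop i (eop j (eop m f)) S"
proof -
  have "eop m (eop i (eop j f)) S = - eop i (eop m (eop j f)) S" by (rule eop_eop)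
  also have "eop m (eop j f) = (\<lambda>S. - eop j (eop m f) S)" by (rule eop_eop_fun)
  finally show ?thesis by (simp add: eop_neg)
qed

lemma iop_eop_fun:
  fixes f :: "'n::{finite,linorder} set \<Rightarrow> complex"
  shows "iop l (eop i f) = (\<lambda>S. (if l = i then f S else 0) - eop i (iop l f) S)"
  by (rule ext) (simp only: eq_diff_eq iop_eop)

lemma iop3:
  fixes f :: "'n::{finite,linorder} set \<Rightarrow> complex"
  shows "iop l (eop i (eop j f)) S = (if l = i then eop j f S else 0) - (if l = j then eop i f S else 0)
     + eop i (eop j (iop l f)) S"
proof -
  have "iop l (eop i (eop j f)) S = (if l = i then eop j f S else 0) - eop i (iop l (eop j f)) S"
    by (simp add: iop_eop_fun)
  also have "eop i (iop l (eop j f)) S = (if l = j then eop i f S else 0) - eop i (eop j (iop l f)) S"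
    by (simp add: iop_eop_fun eop_diff eop_if)
  finally show ?thesis by simp
qed

lemma L1:
  fixes f :: "'n::{finite,linorder} set \<Rightarrow> complex"
  shows "Iop x (Wop c f) S + Wop c (Iop x f) S = (\<Sum>l\<in>UNIV. x l * c l) * f S"
proof -
  have a: "Iop x (Wop c f) S = (\<Sum>l\<in>UNIV. \<Sum>j\<in>UNIV. x l * c j * iop l (eop j f) S)"
    unfolding Iop_def iop_Wop by (simp add: sum_distrib_left mult_ac)
  have b: "Wop c (Iop x f) S = (\<Sum>j\<in>UNIV. \<Sum>l\<in>UNIV. x l * c j * eop j (iop l f) S)"
    unfolding Wop_def eop_Iop by (simp add: sum_distrib_left mult_ac)
  also have "\<dots> = (\<Sum>l\<in>UNIV. \<Sum>j\<in>UNIV. x l * c j * eop j (iop l f) S)"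
    by (rule sum.swap)
  finally have b': "Wop c (Iop x f) S = \<dots>" .
  have "Iop x (Wop c f) S + Wop c (Iop x f) S =
     (\<Sum>l\<in>UNIV. \<Sum>j\<in>UNIV. x l * c j * (iop l (eop j f) S + eop j (iop l f) S))"
    unfolding a b' by (simp add: algebra_simps sum.distrib)
  also have "\<dots> = (\<Sum>l\<in>UNIV. \<Sum>j\<in>UNIV. x l * c j * (if l = j then f S else 0))"
    by (simp add: iop_eop)
  also have "\<dots> = (\<Sum>l\<in>UNIV. x l * c l) * f S"
    by (simp add: sum_distrib_right if_distrib cong: if_cong)
  finally show ?thesis .
qed

lemma L2:
  fixes f :: "'n::{finite,linorder} set \<Rightarrow> complex"
  shows "Wop c (Wop c f) S = 0"
proof -
  let ?s = "Wop c (Wop c f) S"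
  have 1: "?s = (\<Sum>i\<in>UNIV. \<Sum>j\<in>UNIV. c i * c j * eop i (eop j f) S)"
    unfolding Wop_def eop_Wop by (simp add: sum_distrib_left mult_ac)
  also have "\<dots> = (\<Sum>i\<in>UNIV. \<Sum>j\<in>UNIV. - (c i * c j * eop j (eop i f) S))"
    by (subst eop_eop) simp
  also have "\<dots> = - (\<Sum>j\<in>UNIV. \<Sum>i\<in>UNIV. c j * c i * eop j (eop i f) S)"
    by (subst sum.swap) (simp add: sum_negf mult_ac)
  also have "\<dots> = - ?s" using 1 by simp
  finally show ?thesis by simp
qed

lemma L3:
  fixes f :: "'n::{finite,linorder} set \<Rightarrow> complex"
  shows "Wop c (Pop D f) S = Pop D (Wop c f) S"
proof -
  have "Wop c (Pop D f) S = (\<Sum>m\<in>UNIV. \<Sum>i\<in>UNIV. \<Sum>j\<in>UNIV. c m * D i j * eop m (eop i (eop j f)) S)"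
    unfolding Wop_def eop_Pop by (simp add: sum_distrib_left mult_ac)
  also have "\<dots> = (\<Sum>m\<in>UNIV. \<Sum>i\<in>UNIV. \<Sum>j\<in>UNIV. c m * D i j * eop i (eop j (eop m f)) S)"
    by (intro sum.cong refl) (metis eop3)
  also have "\<dots> = (\<Sum>i\<in>UNIV. \<Sum>m\<in>UNIV. \<Sum>j\<in>UNIV. c m * D i j * eop i (eop j (eop m f)) S)"
    by (rule sum.swap)
  also have "\<dots> = (\<Sum>i\<in>UNIV. \<Sum>j\<in>UNIV. \<Sum>m\<in>UNIV. c m * D i j * eop i (eop j (eop m f)) S)"
    by (rule sum.cong[OF refl], rule sum.swap)
  also have "\<dots> = Pop D (Wop c f) S"
    unfolding Pop_def Wop_fun eop_lin by (simp add: sum_distrib_left mult_ac)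
  finally show ?thesis .
qed

lemma sum_if_const: "(\<Sum>j\<in>A. if P then g j else 0) = (if P then (\<Sum>j\<in>A. g j) else 0)"
  by simp

lemma L4:
  fixes f :: "'n::{finite,linorder} set \<Rightarrow> complex"
  shows "Iop x (Pop D f) S = Pop D (Iop x f) S + Wop (\<lambda>j. \<Sum>i\<in>UNIV. x i * (D i j - D j i)) f S"
proof -
  define A where "A = (\<Sum>i\<in>UNIV. \<Sum>j\<in>UNIV. x i * D i j * eop j f S)"
  define B where "B = (\<Sum>i\<in>UNIV. \<Sum>j\<in>UNIV. x j * D i j * eop i f S)"
  define C where "C = (\<Sum>l\<in>UNIV. \<Sum>i\<in>UNIV. \<Sum>j\<in>UNIV. x l * D i j * eop i (eop j (iop l f)) S)"
  have "Iop x (Pop D f) S = (\<Sum>l\<in>UNIV. \<Sum>i\<in>UNIV. \<Sum>j\<in>UNIV. x l * D i j *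
     ((if l = i then eop j f S else 0) - (if l = j then eop i f S else 0) + eop i (eop j (iop l f)) S))"
    unfolding Iop_def iop_Pop iop3 by (simp add: sum_distrib_left mult_ac)
  also have "\<dots> = (\<Sum>l\<in>UNIV. \<Sum>i\<in>UNIV. \<Sum>j\<in>UNIV. (if l = i then x l * D i j * eop j f S else 0))
     - (\<Sum>l\<in>UNIV. \<Sum>i\<in>UNIV. \<Sum>j\<in>UNIV. (if l = j then x l * D i j * eop i f S else 0)) + C"
    unfolding C_def
  proof -
    have "(\<Sum>l\<in>UNIV. \<Sum>i\<in>UNIV. \<Sum>j\<in>UNIV. x l * D i j *
     ((if l = i then eop j f S else 0) - (if l = j then eop i f S else 0) + eop i (eop j (iop l f)) S))
     = (\<Sum>l\<in>UNIV. \<Sum>i\<in>UNIV. \<Sum>j\<in>UNIV. (if l = i then x l * D i j * eop j f S else 0)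
        - (if l = j then x l * D i j * eop i f S else 0) + x l * D i j * eop i (eop j (iop l f)) S)"
      by (intro sum.cong refl) (simp add: algebra_simps)
    then show "(\<Sum>l\<in>UNIV. \<Sum>i\<in>UNIV. \<Sum>j\<in>UNIV. x l * D i j *
     ((if l = i then eop j f S else 0) - (if l = j then eop i f S else 0) + eop i (eop j (iop l f)) S)) =
      (\<Sum>l\<in>UNIV. \<Sum>i\<in>UNIV. \<Sum>j\<in>UNIV. (if l = i then x l * D i j * eop j f S else 0))
     - (\<Sum>l\<in>UNIV. \<Sum>i\<in>UNIV. \<Sum>j\<in>UNIV. (if l = j then x l * D i j * eop i f S else 0)) +
      (\<Sum>l\<in>UNIV. \<Sum>i\<in>UNIV. \<Sum>j\<in>UNIV. x l * D i j * eop i (eop j (iop l f)) S)"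
      by (simp only: sum.distrib sum_subtractf)
  qed
  also have "(\<Sum>l\<in>UNIV. \<Sum>i\<in>UNIV. \<Sum>j\<in>UNIV. (if l = i then x l * D i j * eop j f S else 0)) = A"
    unfolding A_def by (simp only: sum_if_const sum.delta'[OF finite] UNIV_I if_True)
  also have "(\<Sum>l\<in>UNIV. \<Sum>i\<in>UNIV. \<Sum>j\<in>UNIV. (if l = j then x l * D i j * eop i f S else 0)) = B"
  proof -
    have "(\<Sum>l\<in>UNIV. \<Sum>i\<in>UNIV. \<Sum>j\<in>UNIV. (if l = j then x l * D i j * eop i f S else 0))
        = (\<Sum>l\<in>UNIV. \<Sum>i\<in>UNIV. x l * D i l * eop i f S)"
      by (simp add: sum.If_cases)
    also have "\<dots> = B" unfolding B_def by (rule sum.swap)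
    finally show ?thesis .
  qed
  also have "C = Pop D (Iop x f) S"
  proof -
    have "Pop D (Iop x f) S = (\<Sum>i\<in>UNIV. \<Sum>j\<in>UNIV. \<Sum>l\<in>UNIV. x l * D i j * eop i (eop j (iop l f)) S)"
      unfolding Pop_def Iop_fun eop_lin by (simp add: sum_distrib_left mult_ac)
    also have "\<dots> = (\<Sum>i\<in>UNIV. \<Sum>l\<in>UNIV. \<Sum>j\<in>UNIV. x l * D i j * eop i (eop j (iop l f)) S)"
      by (rule sum.cong[OF refl], rule sum.swap)
    also have "\<dots> = C" unfolding C_def by (rule sum.swap)
    finally show ?thesis by simp
  qed
  also have "A - B = Wop (\<lambda>j. \<Sum>i\<in>UNIV. x i * (D i j - D j i)) f S"
  proof -
    have "Wop (\<lambda>j. \<Sum>i\<in>UNIV. x i * (D i j - D j i)) f S =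
       (\<Sum>j\<in>UNIV. \<Sum>i\<in>UNIV. x i * D i j * eop j f S) - (\<Sum>j\<in>UNIV. \<Sum>i\<in>UNIV. x i * D j i * eop j f S)"
    proof -
      have "\<And>j. (\<Sum>i\<in>UNIV. x i * (D i j - D j i)) * eop j f S =
         (\<Sum>i\<in>UNIV. x i * D i j * eop j f S) - (\<Sum>i\<in>UNIV. x i * D j i * eop j f S)"
        unfolding sum_distrib_right sum_subtractf[symmetric] by (intro sum.cong refl) (simp add: algebra_simps)
      then show ?thesis unfolding Wop_def by (simp add: sum_subtractf)
    qed
    also have "(\<Sum>j\<in>UNIV. \<Sum>i\<in>UNIV. x i * D i j * eop j f S) = A"
      unfolding A_def by (rule sum.swap)
    also have "(\<Sum>j\<in>UNIV. \<Sum>i\<in>UNIV. x i * D j i * eop j f S) = B"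
      unfolding B_def ..
    finally show ?thesis by simp
  qed
  ultimately show ?thesis by simp
qed

lemma Pop_scale: "Pop D (\<lambda>S. k * f S) S = k * Pop D f S"
  by (simp add: Pop_def eop_scale sum_distrib_left mult_ac)
lemma Wop_scale: "Wop c (\<lambda>S. k * f S) S = k * Wop c f S"
  by (simp add: Wop_def eop_scale sum_distrib_left mult_ac)
lemma Pop_zero: "Pop D (\<lambda>S. 0) S = 0"
  by (simp add: Pop_def eop_zero)
lemma Wop_zero: "Wop c (\<lambda>S. 0) S = 0"
  by (simp add: Wop_def eop_zero)
lemma Wop_coef: "Wop (\<lambda>j. h * c j) f S = h * Wop c f S"
  by (simp add: Wop_def sum_distrib_left mult_ac)


lemma wsign_single:
  fixes T :: "'n::{finite,linorder} set"
  shows "wsign {j} T = sg j T"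
proof -
  have "{(a,b). a \<in> {j} \<and> b \<in> T \<and> b < a} = Pair j ` {b\<in>T. b < j}" by auto
  moreover have "card (Pair j ` {b\<in>T. b < j}) = card {b\<in>T. b < j}"
    by (rule card_image) (simp add: inj_on_def)
  ultimately show ?thesis by (simp add: wsign_def sg_def)
qed

lemma wsign_pair:
  fixes T :: "'n::{finite,linorder} set"
  assumes "i \<noteq> j"
  shows "wsign {i,j} T = sg i T * sg j T"
proof -
  have "{(a,b). a \<in> {i,j} \<and> b \<in> T \<and> b < a} = Pair i ` {b\<in>T. b < i} \<union> Pair j ` {b\<in>T. b < j}" by auto
  moreover have "card (Pair i ` {b\<in>T. b < i} \<union> Pair j ` {b\<in>T. b < j}) =
      card (Pair i ` {b\<in>T. b < i}) + card (Pair j ` {b\<in>T. b < j})"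
    by (rule card_Un_disjoint) (use assms in auto)
  moreover have "card (Pair i ` {b\<in>T. b < i}) = card {b\<in>T. b < i}"
    by (rule card_image) (simp add: inj_on_def)
  moreover have "card (Pair j ` {b\<in>T. b < j}) = card {b\<in>T. b < j}"
    by (rule card_image) (simp add: inj_on_def)
  ultimately show ?thesis by (simp add: wsign_def sg_def power_add)
qed

lemma eop_same: "eop i (eop i g) S = 0"
  by (simp add: eop_def)

lemma W1:
  fixes g :: "'n::{finite,linorder} set \<Rightarrow> complex"
  shows "wedge (form1 a z) 1 g S = Wop (\<lambda>j. a j z) g S"
proof -
  have set: "{A. A \<subseteq> S \<and> card A = 1} = (\<lambda>j. {j}) ` S"
    by (auto simp: card_1_singleton_iff)
  have "wedge (form1 a z) 1 g S = (\<Sum>j\<in>S. wsign {j} (S - {j}) * form1 a z {j} * g (S - {j}))"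
    unfolding wedge_def set by (subst sum.reindex) (auto simp: inj_on_def)
  also have "\<dots> = (\<Sum>j\<in>S. a j z * (sg j (S - {j}) * g (S - {j})))"
    by (simp add: wsign_single form1_def mult_ac)
  also have "\<dots> = (\<Sum>j\<in>UNIV. if j \<in> S then a j z * (sg j (S - {j}) * g (S - {j})) else 0)"
    by (simp add: sum.If_cases)
  also have "\<dots> = Wop (\<lambda>j. a j z) g S"
    unfolding Wop_def eop_def by (intro sum.cong refl) simp
  finally show ?thesis .
qed

lemma E2:
  fixes g :: "'n::{finite,linorder} set \<Rightarrow> complex"
  assumes "i < j" "i \<in> S" "j \<in> S"
  shows "eop i (eop j g) S = wsign {i,j} (S - {i,j}) * g (S - {i,j})"
proof -
  have ne: "i \<noteq> j" using assms by simp
  have 1: "eop i (eop j g) S = sg i (S - {i}) * (sg j (S - {i} - {j}) * g (S - {i} - {j}))"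
    using assms ne by (simp add: eop_def)
  have "{b \<in> S - {i}. b < i} = {b \<in> S - {i,j}. b < i}" using assms by auto
  then have 2: "sg i (S - {i}) = sg i (S - {i,j})" by (simp add: sg_def)
  have 3: "S - {i} - {j} = S - {i,j}" by auto
  show ?thesis using 1 2 3 by (simp add: wsign_pair[OF ne])
qed

lemma W2:
  fixes g :: "'n::{finite,linorder} set \<Rightarrow> complex"
  shows "wedge (dform1 a z) 2 g S = Pop (\<lambda>i j. pdz (a j) i z) g S"
proof -
  define D where "D = (\<lambda>i j. pdz (a j) i z)"
  define t where "t = (\<lambda>(i,j). D i j * eop i (eop j g) S)"
  define Q where "Q = {(i::'n,j). i < j}"
  define Q' where "Q' = {(i::'n,j). j < i}"
  define QS where "QS = {(i::'n,j). i \<in> S \<and> j \<in> S \<and> i < j}"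
  have "Pop D g S = (\<Sum>p\<in>UNIV \<times> UNIV. t p)"
    unfolding Pop_def t_def by (simp add: sum.cartesian_product)
  also have "\<dots> = (\<Sum>p\<in>Q \<union> Q'. t p)"
  proof (rule sum.mono_neutral_right)
    show "\<forall>p\<in>UNIV \<times> UNIV - (Q \<union> Q'). t p = 0"
    proof
      fix p assume "p \<in> UNIV \<times> UNIV - (Q \<union> Q')"
      then have "fst p = snd p" unfolding Q_def Q'_def by (cases p) auto
      then show "t p = 0" unfolding t_def by (cases p) (simp add: eop_same)
    qed
  qed auto
  also have "\<dots> = (\<Sum>p\<in>Q. t p) + (\<Sum>p\<in>Q'. t p)"
    by (rule sum.union_disjoint) (auto simp: Q_def Q'_def)
  also have "(\<Sum>p\<in>Q'. t p) = (\<Sum>p\<in>Q. t (prod.swap p))"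
  proof -
    have "Q' = prod.swap ` Q" unfolding Q_def Q'_def by auto
    then show ?thesis by (simp add: sum.reindex)
  qed
  also have "(\<Sum>p\<in>Q. t p) + (\<Sum>p\<in>Q. t (prod.swap p)) =
     (\<Sum>p\<in>Q. (D (fst p) (snd p) - D (snd p) (fst p)) * eop (fst p) (eop (snd p) g) S)"
    unfolding sum.distrib[symmetric]
  proof (intro sum.cong refl)
    fix p :: "'n \<times> 'n"
    obtain i j where p: "p = (i,j)" by (cases p)
    have "eop j (eop i g) S = - eop i (eop j g) S" by (rule eop_eop)
    then show "t p + t (prod.swap p) = (D (fst p) (snd p) - D (snd p) (fst p)) * eop (fst p) (eop (snd p) g) S"
      unfolding t_def p by (simp add: algebra_simps)
  qed
  also have "\<dots> = (\<Sum>p\<in>QS. (D (fst p) (snd p) - D (snd p) (fst p)) * eop (fst p) (eop (snd p) g) S)"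
    by (rule sum.mono_neutral_right) (auto simp: Q_def QS_def eop_def)
  also have "\<dots> = (\<Sum>p\<in>QS. wsign {fst p, snd p} (S - {fst p, snd p}) * dform1 a z {fst p, snd p} * g (S - {fst p, snd p}))"
  proof (intro sum.cong refl)
    fix p assume "p \<in> QS"
    then obtain i j where p: "p = (i,j)" "i < j" "i \<in> S" "j \<in> S" unfolding QS_def by auto
    then have "dform1 a z {i,j} = D i j - D j i"
      by (simp add: dform1_def D_def max_def min_def less_imp_le)
    then show "(D (fst p) (snd p) - D (snd p) (fst p)) * eop (fst p) (eop (snd p) g) S =
       wsign {fst p, snd p} (S - {fst p, snd p}) * dform1 a z {fst p, snd p} * g (S - {fst p, snd p})"
      using p by (simp add: E2)
  qed
  also have "\<dots> = wedge (dform1 a z) 2 g S"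
  proof -
    have set: "{A. A \<subseteq> S \<and> card A = 2} = (\<lambda>p. {fst p, snd p}) ` QS"
    proof
      show "{A. A \<subseteq> S \<and> card A = 2} \<subseteq> (\<lambda>p. {fst p, snd p}) ` QS"
      proof
        fix A assume "A \<in> {A. A \<subseteq> S \<and> card A = 2}"
        then obtain x y where A: "A = {x,y}" "x \<noteq> y" "x \<in> S" "y \<in> S"
          by (auto simp: card_2_iff)
        show "A \<in> (\<lambda>p. {fst p, snd p}) ` QS"
        proof (cases "x < y")
          case True then show ?thesis using A unfolding QS_def by (intro image_eqI[of _ _ "(x,y)"]) auto
        next
          case False then have "y < x" using A by auto
          then show ?thesis using A unfolding QS_def by (intro image_eqI[of _ _ "(y,x)"]) auto
        qed
      qed
    next
      show "(\<lambda>p. {fst p, snd p}) ` QS \<subseteq> {A. A \<subseteq> S \<and> card A = 2}"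
        unfolding QS_def by auto
    qed
    have inj: "inj_on (\<lambda>p. {fst p, snd p}) QS"
    proof (rule inj_onI)
      fix p q assume "p \<in> QS" "q \<in> QS" "{fst p, snd p} = {fst q, snd q}"
      then show "p = q" unfolding QS_def by (auto simp: doubleton_eq_iff prod_eq_iff)
    qed
    show ?thesis unfolding wedge_def set by (simp add: sum.reindex[OF inj])
  qed
  finally show ?thesis unfolding D_def by simp
qed


lemma key_alg:
  fixes x c :: "'n::{finite,linorder} \<Rightarrow> complex" and D :: "'n \<Rightarrow> 'n \<Rightarrow> complex"
    and dp :: "nat \<Rightarrow> 'n set \<Rightarrow> complex"
  assumes anti: "\<And>j. (\<Sum>i\<in>UNIV. x i * (D i j - D j i)) = h * c j"
    and orth: "(\<Sum>l\<in>UNIV. x l * c l) = 0"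
    and dp0: "dp 0 = (\<lambda>S. if S = {} then 1 else 0)"
    and dps: "\<And>m. dp (Suc m) = Pop D (dp m)"
  shows "x j * Wop c (dp k) UNIV = 0"
proof -
  have I0: "Iop x (dp 0) = (\<lambda>S. 0)"
    by (rule ext) (simp add: Iop_def iop_def dp0 cong: if_cong)
  have coef: "(\<lambda>j. \<Sum>i\<in>UNIV. x i * (D i j - D j i)) = (\<lambda>j. h * c j)"
    using anti by (rule ext)
  have IS: "Iop x (dp (Suc m)) = (\<lambda>S. of_nat (Suc m) * h * Wop c (dp m) S)" for m
  proof (induction m)
    case 0
    show ?case
    proof (rule ext)
      fix S
      have "Iop x (dp (Suc 0)) S = Pop D (Iop x (dp 0)) S + Wop (\<lambda>j. h * c j) (dp 0) S"
        unfolding dps L4 coef ..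
      also have "\<dots> = h * Wop c (dp 0) S" unfolding I0 Pop_zero Wop_coef by simp
      finally show "Iop x (dp (Suc 0)) S = of_nat (Suc 0) * h * Wop c (dp 0) S" by simp
    qed
  next
    case (Suc m)
    show ?case
    proof (rule ext)
      fix S
      have "Iop x (dp (Suc (Suc m))) S = Pop D (Iop x (dp (Suc m))) S + Wop (\<lambda>j. h * c j) (dp (Suc m)) S"
        unfolding dps[of "Suc m"] L4 coef ..
      also have "Pop D (Iop x (dp (Suc m))) S = of_nat (Suc m) * h * Pop D (Wop c (dp m)) S"
        unfolding Suc Pop_scale ..
      also have "Pop D (Wop c (dp m)) S = Wop c (dp (Suc m)) S"
        unfolding dps L3 ..
      finally show "Iop x (dp (Suc (Suc m))) S = of_nat (Suc (Suc m)) * h * Wop c (dp (Suc m)) S"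
        by (simp add: Wop_coef algebra_simps)
    qed
  qed
  have WI: "Wop c (Iop x (dp k)) S = 0" for S
  proof (cases k)
    case 0 then show ?thesis by (simp add: I0 Wop_zero)
  next
    case (Suc m) then show ?thesis by (simp add: IS Wop_scale L2)
  qed
  have IT: "Iop x (Wop c (dp k)) S = 0" for S
    using L1[of x c "dp k" S] WI[of S] orth by simp
  have "Iop x (Wop c (dp k)) (UNIV - {j}) = x j * sg j (UNIV - {j}) * Wop c (dp k) UNIV"
  proof -
    have "Iop x (Wop c (dp k)) (UNIV - {j}) =
        (\<Sum>l\<in>UNIV. if l = j then x j * sg j (UNIV - {j}) * Wop c (dp k) UNIV else 0)"
      unfolding Iop_def iop_def by (intro sum.cong refl) (auto simp: insert_absorb)
    then show ?thesis by simp
  qed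
  moreover have "sg j (UNIV - {j}) \<noteq> 0" by (simp add: sg_def)
  ultimately show ?thesis using IT[of "UNIV - {j}"] by simp
qed


lemma coord_line_axis: "coord_line z j t = z + axis j t"
  by (simp add: coord_line_def axis_def)

lemma linear_axis: "linear (axis j :: complex \<Rightarrow> complex^'n::finite)"
  by (rule linearI) (simp_all add: axis_def vec_eq_iff)

lemma holo_line_deriv:
  fixes f :: "complex^('n::finite) \<Rightarrow> complex"
  assumes "holo_on W f" "z \<in> W"
  shows "((\<lambda>t. f (coord_line z j t)) has_field_derivative pdz f j z) (at 0)"
proof -
  obtain D where D: "(f has_derivative D) (at z)" and Di: "\<And>v. D (\<chi> i. \<i> * v$i) = \<i> * D v"
    using assms unfolding holo_on_def by blast
  have lin: "linear D" using D by (rule has_derivative_linear)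
  have bl: "bounded_linear (axis j :: complex \<Rightarrow> complex^'n)"
    using linear_axis by (simp add: linear_conv_bounded_linear)
  have c: "((\<lambda>t. coord_line z j t) has_derivative axis j) (at 0)"
  proof -
    have "((\<lambda>t. axis j t + z) has_derivative axis j) (at 0)"
      by (rule has_derivative_add_const[OF bounded_linear_imp_has_derivative[OF bl]])
    then show ?thesis unfolding coord_line_axis by (simp add: add.commute)
  qed
  have c0: "coord_line z j 0 = z" by (simp add: coord_line_def vec_eq_iff)
  have "((f \<circ> (\<lambda>t. coord_line z j t)) has_derivative (D \<circ> axis j)) (at 0)"
    by (rule diff_chain_at[OF c]) (simp add: c0 D)
  moreover have "D \<circ> axis j = (\<lambda>t. D (axis j 1) * t)"
  proof
    fix t :: complex
    have e: "axis j t = Re t *\<^sub>R axis j 1 + Im t *\<^sub>R (\<chi> i. \<i> * (axis j 1 :: complex^'n)$i)"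
      unfolding vec_eq_iff
    proof
      fix i show "axis j t $ i = (Re t *\<^sub>R axis j 1 + Im t *\<^sub>R (\<chi> i. \<i> * (axis j 1 :: complex^'n)$i)) $ i"
        by (cases "i = j") (simp_all add: axis_def complex_eq_iff)
    qed
    have "D (axis j t) = Re t *\<^sub>R D (axis j 1) + Im t *\<^sub>R (\<i> * D (axis j 1))"
      unfolding e linear_add[OF lin] linear_scale[OF lin] Di ..
    also have "\<dots> = D (axis j 1) * t"
    proof -
      have "t = of_real (Re t) + \<i> * of_real (Im t)" by (rule complex_eq)
      then have "t * D (axis j 1) = (of_real (Re t) + \<i> * of_real (Im t)) * D (axis j 1)" by simp
      then show ?thesis by (simp add: scaleR_conv_of_real algebra_simps)
    qed
    finally show "(D \<circ> axis j) t = D (axis j 1) * t" by simp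
  qed
  ultimately have "((\<lambda>t. f (coord_line z j t)) has_field_derivative D (axis j 1)) (at 0)"
    by (simp add: has_field_derivative_def o_def)
  then show ?thesis
    unfolding pdz_def using DERIV_imp_deriv by metis
qed


lemma line_open_ev:
  fixes z :: "complex^'n::finite"
  assumes "open V" "z \<in> V"
  shows "eventually (\<lambda>t. coord_line z j t \<in> V) (nhds 0)"
proof -
  have bl: "bounded_linear (axis j :: complex \<Rightarrow> complex^'n)"
    using linear_axis by (simp add: linear_conv_bounded_linear)
  have cont: "continuous (at t) (\<lambda>t. coord_line z j t)" for t
    unfolding coord_line_axis
    by (intro continuous_intros linear_continuous_at[OF bl])
  have "open ((\<lambda>t. coord_line z j t) -` V)"
    by (rule continuous_open_vimage[OF assms(1) cont])
  moreover have "coord_line z j 0 = z" by (simp add: coord_line_def vec_eq_iff)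
  then have "0 \<in> (\<lambda>t. coord_line z j t) -` V"
    using assms(2) by simp
  ultimately show ?thesis unfolding eventually_nhds by blast
qed

lemma deriv_orth:
  fixes a X :: "'n::finite \<Rightarrow> complex^'n \<Rightarrow> complex"
  assumes "open V" "z \<in> V" "\<And>l. holo_on V (a l)" "\<And>l. holo_on V (X l)"
    and orth: "\<forall>z\<in>V. (\<Sum>l\<in>UNIV. a l z * X l z) = 0"
  shows "(\<Sum>l\<in>UNIV. pdz (a l) j z * X l z + a l z * pdz (X l) j z) = 0"
proof -
  let ?g = "\<lambda>t. \<Sum>l\<in>UNIV. a l (coord_line z j t) * X l (coord_line z j t)"
  have c0: "coord_line z j 0 = z" by (simp add: coord_line_def vec_eq_iff)
  have "(?g has_field_derivative (\<Sum>l\<in>UNIV. pdz (a l) j z * X l z + pdz (X l) j z * a l z)) (at 0)"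
  proof (rule DERIV_sum)
    fix l
    show "((\<lambda>t. a l (coord_line z j t) * X l (coord_line z j t)) has_field_derivative
        pdz (a l) j z * X l z + pdz (X l) j z * a l z) (at 0)"
      using DERIV_mult[OF holo_line_deriv[OF assms(3)[of l] assms(2), of j] holo_line_deriv[OF assms(4)[of l] assms(2), of j]]
      by (simp add: c0)
  qed
  moreover have "eventually (\<lambda>t. ?g t = 0) (nhds 0)"
    using line_open_ev[OF assms(1,2), of j] by eventually_elim (use orth in auto)
  ultimately have "((\<lambda>t. 0) has_field_derivative (\<Sum>l\<in>UNIV. pdz (a l) j z * X l z + pdz (X l) j z * a l z)) (at 0)"
    using DERIV_cong_ev[of 0 0 ?g "\<lambda>t. 0"] by simp
  then have "(\<Sum>l\<in>UNIV. pdz (a l) j z * X l z + pdz (X l) j z * a l z) = 0"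
    using DERIV_const DERIV_unique by blast
  then show ?thesis by (simp add: mult.commute)
qed

theorem theorem3p1:
  fixes k :: nat and U V :: "(complex^('n::{finite,linorder})) set"
    and a X :: "('n::{finite,linorder}) \<Rightarrow> complex^('n::{finite,linorder}) \<Rightarrow> complex"
  assumes "k \<ge> 1" and "CARD('n) = 2 * k + 1"
    and "sing_contact_first_smooth k U a"
    and "open V" and "V \<subseteq> U"
    and "inf_contact_transf V a X"
    and "\<forall>z\<in>V. (\<Sum>j\<in>UNIV. a j z * X j z) = 0"
  shows "\<forall>z\<in>V. \<forall>j. X j z = 0"
proof -
  have holoU: "\<And>l. holo_on U (a l)" and intE: "interior {z\<in>U. martinet_coeff a k z = 0} = {}"
    using assms(3) unfolding sing_contact_first_smooth_def by auto
  have holoV: "\<And>l. holo_on V (a l)"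
    using holoU assms(5) unfolding holo_on_def by blast
  obtain h where holoX: "\<And>l. holo_on V (X l)"
    and lie: "\<And>z j. z \<in> V \<Longrightarrow> lie_coeff X a j z = h z * a j z"
    using assms(6) unfolding inf_contact_transf_def by blast
  have zeroH: "X j z * martinet_coeff a k z = 0" if zV: "z \<in> V" for z j
  proof -
    have d0: "(\<Sum>l\<in>UNIV. pdz (a l) j' z * X l z + a l z * pdz (X l) j' z) = 0" for j'
      by (rule deriv_orth[OF assms(4) zV holoV holoX assms(7)])
    have anti: "(\<Sum>i\<in>UNIV. X i z * (pdz (a j') i z - pdz (a i) j' z)) = h z * a j' z" for j'
    proof -
      have "(\<Sum>i\<in>UNIV. X i z * (pdz (a j') i z - pdz (a i) j' z)) =
          (\<Sum>l\<in>UNIV. X l z * pdz (a j') l z + a l z * pdz (X l) j' z)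
          - (\<Sum>l\<in>UNIV. pdz (a l) j' z * X l z + a l z * pdz (X l) j' z)"
        unfolding sum_subtractf[symmetric] by (intro sum.cong refl) (simp add: algebra_simps)
      also have "\<dots> = h z * a j' z"
        using lie[OF zV, of j'] d0[of j'] by (simp add: lie_coeff_def)
      finally show ?thesis .
    qed
    have orth: "(\<Sum>l\<in>UNIV. X l z * a l z) = 0"
      using assms(7) zV by (simp add: mult.commute)
    have dp0: "dpow a 0 z = (\<lambda>S. if S = {} then 1 else 0)" by (rule ext) simp
    have dps: "dpow a (Suc m) z = Pop (\<lambda>i j. pdz (a j) i z) (dpow a m z)" for m
      by (rule ext) (simp add: W2)
    have "X j z * Wop (\<lambda>j. a j z) (dpow a k z) UNIV = 0"
      by (rule key_alg[of "\<lambda>i. X i z" "\<lambda>i j. pdz (a j) i z" "h z" "\<lambda>j. a j z", OF anti orth dp0 dps])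
    then show ?thesis unfolding martinet_coeff_def W1 .
  qed
  show ?thesis
  proof (intro ballI allI, rule ccontr)
    fix z j assume zV: "z \<in> V" and nz: "X j z \<noteq> 0"
    obtain D where "(X j has_derivative D) (at z)"
      using holoX[of j] zV unfolding holo_on_def by blast
    then have "continuous (at z) (X j)" by (rule has_derivative_continuous)
    then obtain e1 where e1: "e1 > 0" "\<And>y. dist z y < e1 \<Longrightarrow> X j y \<noteq> 0"
      using continuous_at_avoid[of z "X j" 0] nz by blast
    obtain e2 where e2: "e2 > 0" "ball z e2 \<subseteq> V"
      using assms(4) zV unfolding open_contains_ball by blast
    define e where "e = min e1 e2"
    have sub: "ball z e \<subseteq> {z\<in>U. martinet_coeff a k z = 0}"
    proof
      fix y assume y: "y \<in> ball z e"
      then have yV: "y \<in> V" using e2 by (auto simp: e_def)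
      have "X j y \<noteq> 0" using y e1 by (auto simp: e_def)
      then have "martinet_coeff a k y = 0" using zeroH[OF yV, of j] by simp
      then show "y \<in> {z\<in>U. martinet_coeff a k z = 0}" using yV assms(5) by auto
    qed
    have "ball z e \<subseteq> interior {z\<in>U. martinet_coeff a k z = 0}"
      by (rule interior_maximal[OF sub open_ball])
    moreover have "z \<in> ball z e" using e1 e2 by (simp add: e_def)
    ultimately show False using intE by auto
  qed
qed

end
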